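(* Let $\mathcal A\subseteq\mathbb R^s$ be a Borel set with $\lambda^s(\mathcal A)>0$, let $h\colon\mathbb R^s\to\mathbb R^m$, with $s\le m$, be real analytic with $Jh$ not identically zero, and let $f\colon\mathbb R^m\to\mathbb R^n$ be real analytic. If $f$ is one-to-one on $h(\mathcal A)$, then $D(f\circ h)(\mathbf z)\neq\mathbf 0$ for $\lambda^s$-almost all $\mathbf z\in\mathcal A$.
   Context: For differentiable $h\colon\mathbb R^s\to\mathbb R^m$ with $m\ge s$, $Jh(\mathbf v)=\sqrt{\det(Dh(\mathbf v)^TDh(\mathbf v))}$, where $Dh(\mathbf v)\in\mathbb R^{m\times s}$ is the differential. $\lambda^s$ is Lebesgue measure on $\mathbb R^s$. *)

theory Defs
  imports "HOL-Analysis.Analysis"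
begin

text \<open>Real analyticity of a map between Euclidean spaces (given as vector types):
  around every point the map equals an (unconditionally, hence absolutely) convergent
  multivariate power series, indexed by multi-indices \<open>\<alpha> :: 's \<Rightarrow> nat\<close>.\<close>
definition real_analytic :: "(real^'s \<Rightarrow> real^'m) \<Rightarrow> bool" where
  "real_analytic g \<longleftrightarrow>
     (\<forall>x0. \<exists>e>0. \<exists>c :: ('s \<Rightarrow> nat) \<Rightarrow> real^'m.
        \<forall>x\<in>ball x0 e.
          ((\<lambda>\<alpha>. (\<Prod>i\<in>UNIV. (x$i - x0$i) ^ \<alpha> i) *\<^sub>R c \<alpha>) has_sum g x) UNIV)"

definition Dmat :: "(real^'s \<Rightarrow> real^'m) \<Rightarrow> real^'s \<Rightarrow> real^'s^'m" where
  "Dmat g v = matrix (frechet_derivative g (at v))"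

definition jacobian_J :: "(real^'s \<Rightarrow> real^'m) \<Rightarrow> real^'s \<Rightarrow> real" where
  "jacobian_J g v = sqrt (det (transpose (Dmat g v) ** Dmat g v))"

end

theory Submission
  imports Defs "HOL-Complex_Analysis.Complex_Analysis"
begin
no_notation fps_nth (infixl \<open>$\<close> 75)


definition LH :: "(real \<Rightarrow> real) \<Rightarrow> bool" where
  "LH \<phi> \<longleftrightarrow> (\<forall>t0. \<exists>r>0. \<exists>\<Psi>. \<Psi> holomorphic_on ball (complex_of_real t0) r \<and>
      (\<forall>t. \<bar>t - t0\<bar> < r \<longrightarrow> \<Psi> (of_real t) = of_real (\<phi> t)))"

lemma LH_local_deriv:
  assumes hol: "\<Psi> holomorphic_on ball (complex_of_real t0) r"
    and eq: "\<And>t. \<bar>t - t0\<bar> < r \<Longrightarrow> \<Psi> (of_real t) = of_real (\<phi> t)"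
    and s: "\<bar>s - t0\<bar> < r"
  shows "(\<phi> has_real_derivative deriv \<phi> s) (at s) \<and> deriv \<Psi> (of_real s) = of_real (deriv \<phi> s)"
proof -
  have sin: "complex_of_real s \<in> ball (of_real t0) r"
    using s by (simp add: dist_norm abs_minus_commute flip: of_real_diff)
  have d1: "(\<Psi> has_field_derivative deriv \<Psi> (of_real s)) (at (of_real s))"
    using holomorphic_derivI[OF hol open_ball sin] .
  have d2: "((\<lambda>x. \<Psi> (of_real x)) has_vector_derivative deriv \<Psi> (of_real s)) (at s)"
    by (rule has_vector_derivative_real_field[OF d1])
  have d3: "((\<lambda>x. complex_of_real (\<phi> x)) has_vector_derivative deriv \<Psi> (of_real s)) (at s)"
    apply (rule has_vector_derivative_transform_within_open[OF d2, of "{t0 - r <..< t0 + r}"])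
    using s eq by (auto simp: abs_less_iff)
  have d4: "((\<lambda>x. Re (complex_of_real (\<phi> x))) has_field_derivative Re (deriv \<Psi> (of_real s))) (at s)"
    by (rule has_field_derivative_Re[OF d3])
  hence d5: "(\<phi> has_real_derivative Re (deriv \<Psi> (of_real s))) (at s)" by simp
  have "((\<lambda>x. complex_of_real (\<phi> x)) has_vector_derivative of_real (Re (deriv \<Psi> (of_real s)))) (at s)"
    by (rule has_vector_derivative_of_real[OF d5])
  hence "deriv \<Psi> (of_real s) = of_real (Re (deriv \<Psi> (of_real s)))"
    using vector_derivative_unique_at d3 by blast
  moreover have "deriv \<phi> s = Re (deriv \<Psi> (of_real s))" using DERIV_imp_deriv[OF d5] .
  ultimately show ?thesis using d5 by simp
qed

lemma LH_deriv:
  assumes "LH \<phi>"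
  shows "(\<phi> has_real_derivative deriv \<phi> t) (at t)" "LH (deriv \<phi>)"
proof -
  show "(\<phi> has_real_derivative deriv \<phi> t) (at t)"
    using assms unfolding LH_def by (metis LH_local_deriv abs_zero diff_self)
  show "LH (deriv \<phi>)"
    unfolding LH_def
  proof
    fix t0
    obtain r \<Psi> where r: "r > 0" "\<Psi> holomorphic_on ball (complex_of_real t0) r"
      "\<And>t. \<bar>t - t0\<bar> < r \<Longrightarrow> \<Psi> (of_real t) = of_real (\<phi> t)"
      using assms unfolding LH_def by blast
    show "\<exists>r>0. \<exists>\<Psi>. \<Psi> holomorphic_on ball (complex_of_real t0) r \<and>
      (\<forall>t. \<bar>t - t0\<bar> < r \<longrightarrow> \<Psi> (of_real t) = of_real (deriv \<phi> t))"
      using r LH_local_deriv[OF r(2) r(3)] holomorphic_deriv[OF r(2) open_ball] by blast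
  qed
qed

lemma LH_diff:
  assumes "LH \<phi>" "LH \<psi>" shows "LH (\<lambda>t. \<phi> t - \<psi> t)"
  unfolding LH_def
proof
  fix t0
  obtain r \<Psi> where r: "r > 0" "\<Psi> holomorphic_on ball (complex_of_real t0) r"
      "\<And>t. \<bar>t - t0\<bar> < r \<Longrightarrow> \<Psi> (of_real t) = of_real (\<phi> t)"
    using assms unfolding LH_def by blast
  obtain r' \<Psi>' where r': "r' > 0" "\<Psi>' holomorphic_on ball (complex_of_real t0) r'"
      "\<And>t. \<bar>t - t0\<bar> < r' \<Longrightarrow> \<Psi>' (of_real t) = of_real (\<psi> t)"
    using assms unfolding LH_def by blast
  have "(\<lambda>z. \<Psi> z - \<Psi>' z) holomorphic_on ball (complex_of_real t0) (min r r')"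
    by (intro holomorphic_intros holomorphic_on_subset[OF r(2)] holomorphic_on_subset[OF r'(2)]) auto
  then show "\<exists>r>0. \<exists>\<Psi>. \<Psi> holomorphic_on ball (complex_of_real t0) r \<and>
      (\<forall>t. \<bar>t - t0\<bar> < r \<longrightarrow> \<Psi> (of_real t) = of_real (\<phi> t - \<psi> t))"
    using r r' by (intro exI[of _ "min r r'"] conjI exI[of _ "\<lambda>z. \<Psi> z - \<Psi>' z"]) auto
qed

lemma LH_const: "LH (\<lambda>t. c)"
  unfolding LH_def by (intro allI exI[of _ 1] conjI exI[of _ "\<lambda>_. complex_of_real c"]) auto

lemma islimpt_of_real:
  assumes "x islimpt S" shows "complex_of_real x islimpt (of_real ` S)"
  using assms unfolding islimpt_approachable
  by (metis dist_of_real image_eqI of_real_eq_iff)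

lemma LH_zero:
  assumes "LH \<phi>" "\<xi> islimpt T" "\<And>t. t \<in> T \<Longrightarrow> \<phi> t = 0"
  shows "\<phi> t = 0"
proof -
  define Z where "Z = {t. \<phi> t = 0}"
  define U where "U = {t. t islimpt Z}"
  have loc: "\<exists>r>0. \<forall>s. \<bar>s - t\<bar> < r \<longrightarrow> \<phi> s = 0" if "t \<in> U" for t
  proof -
    obtain r \<Psi> where r: "r > 0" "\<Psi> holomorphic_on ball (complex_of_real t) r"
      "\<And>s. \<bar>s - t\<bar> < r \<Longrightarrow> \<Psi> (of_real s) = of_real (\<phi> s)"
      using assms(1) unfolding LH_def by blast
    define Z' where "Z' = complex_of_real ` (Z \<inter> ball t r)"
    have "t islimpt (Z \<inter> ball t r)"
      using that r(1) unfolding U_def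
      by (intro islimpt_Int_eventually) (auto simp: eventually_at dist_commute intro!: exI[of _ r])
    hence lim: "complex_of_real t islimpt Z'" unfolding Z'_def by (rule islimpt_of_real)
    have sub: "Z' \<subseteq> ball (complex_of_real t) r"
      unfolding Z'_def by (auto simp: dist_of_real)
    have z0: "\<Psi> z = 0" if "z \<in> Z'" for z
      using that r(3) unfolding Z'_def Z_def by (auto simp: dist_real_def abs_minus_commute)
    have "\<Psi> w = 0" if "w \<in> ball (complex_of_real t) r" for w
      by (rule analytic_continuation[OF r(2) open_ball connected_ball sub _ lim z0 that]) (use r in auto)
    hence "\<phi> s = 0" if "\<bar>s - t\<bar> < r" for s
      using r(3)[OF that] that by (auto simp: dist_of_real dist_real_def abs_minus_commute)
    thus ?thesis using r(1) by blast
  qed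
  have "open U"
    unfolding open_dist
  proof
    fix t assume "t \<in> U"
    then obtain r where r: "r > 0" "\<And>s. \<bar>s - t\<bar> < r \<Longrightarrow> \<phi> s = 0" using loc by blast
    have "y \<in> U" if "dist y t < r" for y
    proof -
      have "ball y (r - dist y t) \<subseteq> Z"
        using r that unfolding Z_def by (auto simp: dist_real_def abs_minus_commute)
      hence "y islimpt Z"
        using that by (intro islimpt_subset[OF open_imp_islimpt[OF open_ball]]) auto
      thus ?thesis unfolding U_def by simp
    qed
    thus "\<exists>e>0. \<forall>y. dist y t < e \<longrightarrow> y \<in> U" using r by blast
  qed
  moreover have "closed U" unfolding U_def by (rule closed_limpts)
  moreover have "\<xi> \<in> U"
    unfolding U_def using assms(2,3) islimpt_subset[of \<xi> T Z] by (auto simp: Z_def)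
  ultimately have "U = UNIV"
    using connected_UNIV[where 'a=real] unfolding connected_clopen
    by (metis closedin_closed_Int empty_iff inf_top.left_neutral open_openin openin_subtopology_Int2 subtopology_UNIV)
  then show ?thesis using loc[of t] by force
qed

lemma pos_measure_limpt:
  fixes T :: "real set"
  assumes "emeasure lborel T \<noteq> 0"
  obtains \<xi> where "\<xi> islimpt T"
proof (rule ccontr)
  assume no: "\<not> thesis"
  have fin: "finite (T \<inter> cball 0 (real N))" for N :: nat
  proof (rule ccontr)
    assume "infinite (T \<inter> cball 0 (real N))"
    then obtain x where "x islimpt (T \<inter> cball 0 (real N))"
      using bounded_infinite_imp_islimpt[of "T \<inter> cball 0 (real N)" "T \<inter> cball 0 (real N)"] by auto
    hence "x islimpt T" using islimpt_subset by blast
    thus False using no that by blast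
  qed
  have "T = (\<Union>N. T \<inter> cball 0 (real N))"
    by (auto simp: dist_real_def) (meson real_arch_simple)
  hence "countable T"
    by (metis countable_UN[of UNIV] countable_finite fin countableI_type)
  hence "emeasure lborel T = 0" by (rule emeasure_lborel_countable)
  thus False using assms by simp
qed


no_notation fps_nth (infixl \<open>$\<close> 75)

lemma analytic_local:
  fixes h :: "real^'s \<Rightarrow> real^'m"
  assumes "real_analytic h"
  obtains r c where "r > 0"
    "\<And>x. (\<forall>i. \<bar>x$i - x0$i\<bar> \<le> r) \<Longrightarrow> ((\<lambda>\<alpha>. (\<Prod>i\<in>UNIV. (x$i - x0$i) ^ \<alpha> i) *\<^sub>R c \<alpha>) has_sum h x) UNIV"
    "\<And>j. (\<lambda>\<alpha>. \<bar>c \<alpha> $ j\<bar> * (\<Prod>i\<in>UNIV. r ^ \<alpha> i)) summable_on UNIV"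
proof -
  obtain e c where e: "e > 0" and c: "\<And>x. x \<in> ball x0 e \<Longrightarrow>
      ((\<lambda>\<alpha>. (\<Prod>i\<in>UNIV. (x$i - x0$i) ^ \<alpha> i) *\<^sub>R c \<alpha>) has_sum h x) UNIV"
    using assms unfolding real_analytic_def by blast
  define r where "r = e / (2 * real CARD('s))"
  have r: "r > 0" using e by (simp add: r_def)
  have inball: "x \<in> ball x0 e" if "\<forall>i. \<bar>x$i - x0$i\<bar> \<le> r" for x
  proof -
    have "dist x0 x = norm (x - x0)" by (simp add: dist_norm norm_minus_commute)
    also have "\<dots> \<le> (\<Sum>i\<in>UNIV. \<bar>(x - x0)$i\<bar>)" by (rule norm_le_l1_cart)
    also have "\<dots> \<le> (\<Sum>i\<in>(UNIV::'s set). r)" by (intro sum_mono) (use that in auto)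
    also have "\<dots> = e / 2" using e by (simp add: r_def)
    also have "\<dots> < e" using e by simp
    finally show ?thesis by simp
  qed
  have has: "((\<lambda>\<alpha>. (\<Prod>i\<in>UNIV. (x$i - x0$i) ^ \<alpha> i) *\<^sub>R c \<alpha>) has_sum h x) UNIV"
    if "\<forall>i. \<bar>x$i - x0$i\<bar> \<le> r" for x using c inball that by blast
  have sm: "(\<lambda>\<alpha>. \<bar>c \<alpha> $ j\<bar> * (\<Prod>i\<in>UNIV. r ^ \<alpha> i)) summable_on UNIV" for j
  proof -
    define p :: "real^'s" where "p = (\<chi> i. x0$i + r)"
    have "((\<lambda>\<alpha>. (\<Prod>i\<in>UNIV. (p$i - x0$i) ^ \<alpha> i) *\<^sub>R c \<alpha>) has_sum h p) UNIV"
      using r by (intro has) (simp add: p_def)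
    hence "((\<lambda>\<alpha>. (\<Prod>i\<in>UNIV. r ^ \<alpha> i) * c \<alpha> $ j) has_sum h p $ j) UNIV"
      using has_sum_bounded_linear[OF bounded_linear_vec_nth[of j]] by (fastforce simp: p_def)
    hence "(\<lambda>\<alpha>. (\<Prod>i\<in>UNIV. r ^ \<alpha> i) * c \<alpha> $ j) summable_on UNIV"
      by (rule has_sum_imp_summable)
    hence "(\<lambda>\<alpha>. norm ((\<Prod>i\<in>UNIV. r ^ \<alpha> i) * c \<alpha> $ j)) summable_on UNIV"
      by (rule summable_on_iff_abs_summable_on_real[THEN iffD1])
    moreover have "norm ((\<Prod>i\<in>UNIV. r ^ \<alpha> i) * c \<alpha> $ j) = \<bar>c \<alpha> $ j\<bar> * (\<Prod>i\<in>UNIV. r ^ \<alpha> i)" for \<alpha>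
      using r by (simp add: abs_mult abs_prod prod_nonneg)
    ultimately show ?thesis by simp
  qed
  show ?thesis using that[OF r has sm] by blast
qed

lemma series_holomorphic:
  fixes a :: "('k::finite \<Rightarrow> nat) \<Rightarrow> real" and G :: "'k \<Rightarrow> complex \<Rightarrow> complex"
  assumes summ: "(\<lambda>\<alpha>. \<bar>a \<alpha>\<bar> * (\<Prod>i\<in>UNIV. r ^ \<alpha> i)) summable_on UNIV"
    and hol: "\<And>i. G i holomorphic_on ball z0 \<rho>"
    and bnd: "\<And>i z. z \<in> ball z0 \<rho> \<Longrightarrow> norm (G i z) \<le> r"
  shows "(\<lambda>z. \<Sum>\<^sub>\<infinity>\<alpha>. of_real (a \<alpha>) * (\<Prod>i\<in>UNIV. G i z ^ \<alpha> i)) holomorphic_on ball z0 \<rho>"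
    and "\<And>z. z \<in> ball z0 \<rho> \<Longrightarrow> ((\<lambda>\<alpha>. of_real (a \<alpha>) * (\<Prod>i\<in>UNIV. G i z ^ \<alpha> i)) has_sum
            (\<Sum>\<^sub>\<infinity>\<alpha>. of_real (a \<alpha>) * (\<Prod>i\<in>UNIV. G i z ^ \<alpha> i))) UNIV"
proof -
  define t where "t = (\<lambda>\<alpha> z. complex_of_real (a \<alpha>) * (\<Prod>i\<in>UNIV. G i z ^ \<alpha> i))"
  have nb: "norm (t \<alpha> z) \<le> \<bar>a \<alpha>\<bar> * (\<Prod>i\<in>UNIV. r ^ \<alpha> i)" if "z \<in> ball z0 \<rho>" for \<alpha> z
  proof -
    have "norm (t \<alpha> z) = \<bar>a \<alpha>\<bar> * (\<Prod>i\<in>UNIV. norm (G i z) ^ \<alpha> i)"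
      by (simp add: t_def norm_mult flip: prod_norm) (simp add: norm_power)
    also have "\<dots> \<le> \<bar>a \<alpha>\<bar> * (\<Prod>i\<in>UNIV. r ^ \<alpha> i)"
      by (intro mult_left_mono prod_mono conjI power_mono bnd that) auto
    finally show ?thesis .
  qed
  show "((\<lambda>\<alpha>. of_real (a \<alpha>) * (\<Prod>i\<in>UNIV. G i z ^ \<alpha> i)) has_sum
            (\<Sum>\<^sub>\<infinity>\<alpha>. of_real (a \<alpha>) * (\<Prod>i\<in>UNIV. G i z ^ \<alpha> i))) UNIV" if "z \<in> ball z0 \<rho>" for z
  proof -
    have "(\<lambda>\<alpha>. norm (t \<alpha> z)) summable_on UNIV"
      by (rule summable_on_comparison_test[OF summ]) (use nb[OF that] in auto)
    hence "(\<lambda>\<alpha>. t \<alpha> z) summable_on UNIV" by (rule abs_summable_summable)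
    thus ?thesis unfolding t_def by simp
  qed
  have "\<exists>f'. ((\<lambda>z. \<Sum>\<^sub>\<infinity>\<alpha>. t \<alpha> z) has_field_derivative f') (at w)" if w: "w \<in> ball z0 \<rho>" for w
  proof -
    define \<delta> where "\<delta> = (\<rho> - dist z0 w) / 2"
    have \<delta>: "\<delta> > 0" using w by (simp add: \<delta>_def)
    have sub: "cball w \<delta> \<subseteq> ball z0 \<rho>"
      using w by (auto simp: \<delta>_def dist_commute) (smt (verit) dist_triangle)
    have ul: "uniform_limit (cball w \<delta>) (\<lambda>X z. \<Sum>\<alpha>\<in>X. t \<alpha> z) (\<lambda>z. \<Sum>\<^sub>\<infinity>\<alpha>. t \<alpha> z) (finite_subsets_at_top UNIV)"
      by (rule Weierstrass_m_test_general[OF _ summ]) (use nb sub in auto)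
    have "continuous_on (cball w \<delta>) (\<lambda>z. \<Sum>\<^sub>\<infinity>\<alpha>. t \<alpha> z) \<and> (\<lambda>z. \<Sum>\<^sub>\<infinity>\<alpha>. t \<alpha> z) holomorphic_on ball w \<delta>"
    proof (rule holomorphic_uniform_limit[OF _ ul])
      have "(\<lambda>z. \<Sum>\<alpha>\<in>X. t \<alpha> z) holomorphic_on ball z0 \<rho>" for X
        unfolding t_def by (intro holomorphic_intros hol)
      thus "\<forall>\<^sub>F X in finite_subsets_at_top UNIV. continuous_on (cball w \<delta>) (\<lambda>z. \<Sum>\<alpha>\<in>X. t \<alpha> z) \<and>
          (\<lambda>z. \<Sum>\<alpha>\<in>X. t \<alpha> z) holomorphic_on ball w \<delta>"
        using sub by (intro always_eventually allI conjI holomorphic_on_imp_continuous_on)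
          (meson holomorphic_on_subset ball_subset_cball order_trans)+
    qed auto
    hence "(\<lambda>z. \<Sum>\<^sub>\<infinity>\<alpha>. t \<alpha> z) holomorphic_on ball w \<delta>" by blast
    thus ?thesis using \<delta> holomorphic_on_open[OF open_ball] by auto
  qed
  thus "(\<lambda>z. \<Sum>\<^sub>\<infinity>\<alpha>. of_real (a \<alpha>) * (\<Prod>i\<in>UNIV. G i z ^ \<alpha> i)) holomorphic_on ball z0 \<rho>"
    by (subst holomorphic_on_open[OF open_ball]) (simp add: t_def)
qed



lemma LH_from_series:
  fixes a :: "('k::finite \<Rightarrow> nat) \<Rightarrow> real" and G :: "'k \<Rightarrow> complex \<Rightarrow> complex"
  assumes summ: "(\<lambda>\<alpha>. \<bar>a \<alpha>\<bar> * (\<Prod>i\<in>UNIV. r ^ \<alpha> i)) summable_on UNIV"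
    and hol: "\<And>i. G i holomorphic_on ball (complex_of_real t0) \<rho>"
    and bnd: "\<And>i z. z \<in> ball (complex_of_real t0) \<rho> \<Longrightarrow> norm (G i z) \<le> r"
    and \<rho>: "\<rho> > 0"
    and hs: "\<And>t. \<bar>t - t0\<bar> < \<rho> \<Longrightarrow>
       ((\<lambda>\<alpha>. of_real (a \<alpha>) * (\<Prod>i\<in>UNIV. G i (of_real t) ^ \<alpha> i)) has_sum of_real (\<phi> t)) UNIV"
  shows "\<exists>r>0. \<exists>\<Psi>. \<Psi> holomorphic_on ball (complex_of_real t0) r \<and>
      (\<forall>t. \<bar>t - t0\<bar> < r \<longrightarrow> \<Psi> (of_real t) = of_real (\<phi> t))"
proof -
  define \<Psi> where "\<Psi> = (\<lambda>z. \<Sum>\<^sub>\<infinity>\<alpha>. of_real (a \<alpha>) * (\<Prod>i\<in>UNIV. G i z ^ \<alpha> i))"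
  have H: "\<Psi> holomorphic_on ball (of_real t0) \<rho>"
    unfolding \<Psi>_def by (rule series_holomorphic(1)[OF summ hol bnd])
  have E: "\<Psi> (of_real t) = of_real (\<phi> t)" if t: "\<bar>t - t0\<bar> < \<rho>" for t
  proof -
    have "of_real t \<in> ball (complex_of_real t0) \<rho>"
      using t by (simp add: dist_norm abs_minus_commute flip: of_real_diff)
    from series_holomorphic(2)[OF summ hol bnd this]
    show ?thesis unfolding \<Psi>_def by (rule has_sum_unique[OF _ hs[OF t]])
  qed
  show ?thesis using H E \<rho> by blast
qed

lemma LH_line:
  fixes h :: "real^'s \<Rightarrow> real^'m"
  assumes "real_analytic h"
  shows "LH (\<lambda>t. h (x + t *\<^sub>R v) $ j)"
  unfolding LH_def
proof
  fix t0
  define y0 where "y0 = x + t0 *\<^sub>R v"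
  obtain r c where r: "r > 0"
    and hs: "\<And>y. (\<forall>i. \<bar>y$i - y0$i\<bar> \<le> r) \<Longrightarrow> ((\<lambda>\<alpha>. (\<Prod>i\<in>UNIV. (y$i - y0$i) ^ \<alpha> i) *\<^sub>R c \<alpha>) has_sum h y) UNIV"
    and sm: "\<And>j. (\<lambda>\<alpha>. \<bar>c \<alpha> $ j\<bar> * (\<Prod>i\<in>UNIV. r ^ \<alpha> i)) summable_on UNIV"
    using analytic_local[OF assms, of y0] by blast
  define V where "V = (\<Sum>i\<in>UNIV. \<bar>v$i\<bar>) + 1"
  have V: "V > 0" "\<And>i. \<bar>v$i\<bar> \<le> V"
  proof -
    have A: "0 \<le> (\<Sum>i\<in>UNIV. \<bar>v$i\<bar>)" by (intro sum_nonneg) auto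
    have B: "\<bar>v$i\<bar> \<le> (\<Sum>i\<in>UNIV. \<bar>v$i\<bar>)" for i by (rule member_le_sum) auto
    show "V > 0" unfolding V_def using A by linarith
    show "\<bar>v$i\<bar> \<le> V" for i unfolding V_def using B[of i] by linarith
  qed
  define \<rho> where "\<rho> = r / V"
  have \<rho>: "\<rho> > 0" using r V by (simp add: \<rho>_def)
  have rV: "V * \<rho> = r" using V by (simp add: \<rho>_def)
  define G where "G = (\<lambda>i z. complex_of_real (v$i) * (z - of_real t0))"
  have bndG: "norm (G i z) \<le> r" if "z \<in> ball (complex_of_real t0) \<rho>" for i z
  proof -
    have "norm (G i z) = \<bar>v$i\<bar> * norm (z - of_real t0)" by (simp add: G_def norm_mult)
    also have "\<dots> \<le> V * \<rho>"
      using that V(2)[of i] by (intro mult_mono) (auto simp: dist_norm norm_minus_commute)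
    finally show ?thesis using rV by simp
  qed
  show "\<exists>r>0. \<exists>\<Psi>. \<Psi> holomorphic_on ball (complex_of_real t0) r \<and>
      (\<forall>t. \<bar>t - t0\<bar> < r \<longrightarrow> \<Psi> (of_real t) = of_real (h (x + t *\<^sub>R v) $ j))"
  proof (rule LH_from_series[OF sm[of j] _ bndG \<rho>])
    show "G i holomorphic_on ball (complex_of_real t0) \<rho>" for i
      unfolding G_def by (intro holomorphic_intros)
    fix t assume t: "\<bar>t - t0\<bar> < \<rho>"
    have comp: "(x + t *\<^sub>R v)$i - y0$i = (t - t0) * v$i" for i
      by (simp add: y0_def algebra_simps)
    have "\<bar>(x + t *\<^sub>R v)$i - y0$i\<bar> \<le> r" for i
    proof -
      have "\<bar>(x + t *\<^sub>R v)$i - y0$i\<bar> = \<bar>t - t0\<bar> * \<bar>v$i\<bar>" by (subst comp) (simp add: abs_mult)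
      also have "\<dots> \<le> \<rho> * V" using t V(2)[of i] by (intro mult_mono) auto
      finally show ?thesis using rV by (simp add: mult.commute)
    qed
    hence "((\<lambda>\<alpha>. (\<Prod>i\<in>UNIV. ((x + t *\<^sub>R v)$i - y0$i) ^ \<alpha> i) *\<^sub>R c \<alpha>) has_sum h (x + t *\<^sub>R v)) UNIV"
      using hs by blast
    from has_sum_bounded_linear[OF bounded_linear_vec_nth[of j] this]
    have "((\<lambda>\<alpha>. (\<Prod>i\<in>UNIV. ((t - t0) * v$i) ^ \<alpha> i) * c \<alpha> $ j) has_sum h (x + t *\<^sub>R v) $ j) UNIV"
      unfolding comp by simp
    from has_sum_bounded_linear[OF bounded_linear_of_real this]
    show "((\<lambda>\<alpha>. complex_of_real (c \<alpha> $ j) * (\<Prod>i\<in>UNIV. G i (complex_of_real t) ^ \<alpha> i)) has_sum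
          complex_of_real (h (x + t *\<^sub>R v) $ j)) UNIV"
      by (simp add: G_def mult.commute flip: of_real_diff of_real_mult of_real_power of_real_prod)
  qed
qed

lemma LH_comp:
  fixes h :: "real^'s \<Rightarrow> real^'m" and f :: "real^'m \<Rightarrow> real^'n"
  assumes ah: "real_analytic h" and af: "real_analytic f"
  shows "LH (\<lambda>t. f (h (x + t *\<^sub>R v)) $ j)"
  unfolding LH_def
proof
  fix t0
  define y1 where "y1 = h (x + t0 *\<^sub>R v)"
  obtain r d where r: "r > 0"
    and hs: "\<And>y. (\<forall>i. \<bar>y$i - y1$i\<bar> \<le> r) \<Longrightarrow> ((\<lambda>\<alpha>. (\<Prod>i\<in>UNIV. (y$i - y1$i) ^ \<alpha> i) *\<^sub>R d \<alpha>) has_sum f y) UNIV"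
    and sm: "\<And>j. (\<lambda>\<alpha>. \<bar>d \<alpha> $ j\<bar> * (\<Prod>i\<in>UNIV. r ^ \<alpha> i)) summable_on UNIV"
    using analytic_local[OF af, of y1] by blast
  have "\<forall>i. \<exists>ri \<Psi>. ri > 0 \<and> \<Psi> holomorphic_on ball (complex_of_real t0) ri \<and>
      (\<forall>t. \<bar>t - t0\<bar> < ri \<longrightarrow> \<Psi> (of_real t) = of_real (h (x + t *\<^sub>R v) $ i))"
    using LH_line[OF ah] unfolding LH_def by blast
  then obtain R \<Psi> where R: "\<And>i. R i > 0" "\<And>i. \<Psi> i holomorphic_on ball (complex_of_real t0) (R i)"
     "\<And>i t. \<bar>t - t0\<bar> < R i \<Longrightarrow> \<Psi> i (of_real t) = of_real (h (x + t *\<^sub>R v) $ i)"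
    by metis
  have \<Psi>0: "\<Psi> i (of_real t0) = of_real (y1 $ i)" for i using R(3)[of t0 i] R(1)[of i] by (simp add: y1_def)
  have ev: "eventually (\<lambda>z. z \<in> ball (complex_of_real t0) (R i) \<and> norm (\<Psi> i z - of_real (y1$i)) < r)
      (nhds (complex_of_real t0))" for i
  proof -
    have "continuous (at (complex_of_real t0)) (\<Psi> i)"
      by (rule continuous_on_interior[OF holomorphic_on_imp_continuous_on[OF R(2)]]) (use R(1) in auto)
    hence "(\<Psi> i \<longlongrightarrow> of_real (y1$i)) (nhds (complex_of_real t0))"
      using \<Psi>0 by (simp add: continuous_at tendsto_nhds_iff)  
    hence "eventually (\<lambda>z. dist (\<Psi> i z) (of_real (y1$i)) < r) (nhds (complex_of_real t0))"
      using r tendstoD by blast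
    moreover have "eventually (\<lambda>z. z \<in> ball (complex_of_real t0) (R i)) (nhds (complex_of_real t0))"
      using R(1) by (intro eventually_nhds_in_open) auto
    ultimately show ?thesis by eventually_elim (simp add: dist_norm)
  qed
  have "eventually (\<lambda>z. \<forall>i. z \<in> ball (complex_of_real t0) (R i) \<and> norm (\<Psi> i z - of_real (y1$i)) < r)
      (nhds (complex_of_real t0))"
    by (rule eventually_all_finite) (rule ev)
  then obtain \<rho> where \<rho>: "\<rho> > 0" and \<rho>P: "\<And>z i. dist z (complex_of_real t0) < \<rho> \<Longrightarrow>
       z \<in> ball (complex_of_real t0) (R i) \<and> norm (\<Psi> i z - of_real (y1$i)) < r"
    unfolding eventually_nhds_metric by blast
  define G where "G = (\<lambda>i z. \<Psi> i z - complex_of_real (y1$i))"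
  show "\<exists>r>0. \<exists>\<Psi>. \<Psi> holomorphic_on ball (complex_of_real t0) r \<and>
      (\<forall>t. \<bar>t - t0\<bar> < r \<longrightarrow> \<Psi> (of_real t) = of_real (f (h (x + t *\<^sub>R v)) $ j))"
  proof (rule LH_from_series[OF sm[of j] _ _ \<rho>, where G = G])
    show "G i holomorphic_on ball (complex_of_real t0) \<rho>" for i
      unfolding G_def
    proof (intro holomorphic_intros holomorphic_on_subset[OF R(2)[of i]])
      show "ball (complex_of_real t0) \<rho> \<subseteq> ball (complex_of_real t0) (R i)"
        using \<rho>P by (auto simp: dist_commute)
    qed
    show "norm (G i z) \<le> r" if "z \<in> ball (complex_of_real t0) \<rho>" for i z
      using \<rho>P[of z i] that by (simp add: G_def dist_commute)
    fix t assume t: "\<bar>t - t0\<bar> < \<rho>"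
    have dt: "dist (complex_of_real t) (complex_of_real t0) < \<rho>"
      using t by (simp add: dist_norm flip: of_real_diff)
    have ti: "\<bar>t - t0\<bar> < R i" for i
      using \<rho>P[OF dt, of i] by (simp add: dist_norm abs_minus_commute flip: of_real_diff)
    have Gt: "G i (of_real t) = of_real (h (x + t *\<^sub>R v) $ i - y1 $ i)" for i
      using R(3)[OF ti[of i]] by (simp add: G_def)
    have "\<bar>h (x + t *\<^sub>R v) $ i - y1$i\<bar> \<le> r" for i
      using \<rho>P[OF dt, of i] R(3)[OF ti[of i]] by (simp flip: of_real_diff)
    hence "((\<lambda>\<alpha>. (\<Prod>i\<in>UNIV. (h (x + t *\<^sub>R v)$i - y1$i) ^ \<alpha> i) *\<^sub>R d \<alpha>) has_sum f (h (x + t *\<^sub>R v))) UNIV"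
      using hs by blast
    from has_sum_bounded_linear[OF bounded_linear_vec_nth[of j] this]
    have "((\<lambda>\<alpha>. (\<Prod>i\<in>UNIV. (h (x + t *\<^sub>R v)$i - y1$i) ^ \<alpha> i) * d \<alpha> $ j) has_sum f (h (x + t *\<^sub>R v)) $ j) UNIV"
      by simp
    from has_sum_bounded_linear[OF bounded_linear_of_real this]
    show "((\<lambda>\<alpha>. complex_of_real (d \<alpha> $ j) * (\<Prod>i\<in>UNIV. G i (complex_of_real t) ^ \<alpha> i)) has_sum
          complex_of_real (f (h (x + t *\<^sub>R v)) $ j)) UNIV"
      by (simp add: Gt mult.commute flip: of_real_diff of_real_mult of_real_power of_real_prod)
  qed
qed



lemma summable_on_finsum:
  fixes g :: "'j \<Rightarrow> 'a \<Rightarrow> real"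
  assumes "finite I" "\<And>j. j \<in> I \<Longrightarrow> g j summable_on A"
  shows "(\<lambda>\<alpha>. \<Sum>j\<in>I. g j \<alpha>) summable_on A"
  using assms by (induct rule: finite_induct) (auto intro: summable_on_add)

lemma multiindex_small:
  fixes \<alpha> :: "'s::finite \<Rightarrow> nat"
  assumes "\<alpha> \<notin> insert (\<lambda>_. 0) (range (\<lambda>i k. if k = i then 1 else 0))"
  shows "(\<Sum>i\<in>UNIV. \<alpha> i) \<ge> 2"
proof (rule ccontr)
  assume "\<not> ?thesis"
  hence "(\<Sum>i\<in>UNIV. \<alpha> i) = 0 \<or> (\<Sum>i\<in>UNIV. \<alpha> i) = 1" by linarith
  thus False
  proof
    assume "(\<Sum>i\<in>UNIV. \<alpha> i) = 0"
    hence "\<alpha> = (\<lambda>_. 0)" by (auto simp: fun_eq_iff)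
    thus False using assms by auto
  next
    assume "(\<Sum>i\<in>UNIV. \<alpha> i) = 1"
    then obtain i where "\<alpha> i = 1" "\<And>b. b \<noteq> i \<Longrightarrow> \<alpha> b = 0"
      using sum_eq_1_iff[of UNIV \<alpha>] by auto
    hence "\<alpha> = (\<lambda>k. if k = i then 1 else 0)" by (auto simp: fun_eq_iff)
    thus False using assms by auto
  qed
qed

lemma analytic_has_derivative:
  fixes h :: "real^'s \<Rightarrow> real^'m"
  assumes "real_analytic h"
  shows "h differentiable (at x0)"
proof -
  obtain r c where r: "r > 0"
    and hs: "\<And>y. (\<forall>i. \<bar>y$i - x0$i\<bar> \<le> r) \<Longrightarrow> ((\<lambda>\<alpha>. (\<Prod>i\<in>UNIV. (y$i - x0$i) ^ \<alpha> i) *\<^sub>R c \<alpha>) has_sum h y) UNIV"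
    and sm: "\<And>j. (\<lambda>\<alpha>. \<bar>c \<alpha> $ j\<bar> * (\<Prod>i\<in>UNIV. r ^ \<alpha> i)) summable_on UNIV"
    using analytic_local[OF assms, of x0] by blast
  define e where "e = (\<lambda>i::'s. \<lambda>k. if k = i then 1 else (0::nat))"
  define z0 where "z0 = (\<lambda>_::'s. 0::nat)"
  define N where "N = insert z0 (range e)"
  define T where "T = (\<lambda>w::real^'s. \<lambda>\<alpha>. (\<Prod>i\<in>UNIV. (w$i) ^ \<alpha> i) *\<^sub>R c \<alpha>)"
  define L where "L = (\<lambda>w::real^'s. \<Sum>i\<in>UNIV. w$i *\<^sub>R c (e i))"
  define P where "P = (\<lambda>\<alpha>::'s\<Rightarrow>nat. (\<Prod>i\<in>UNIV. r ^ \<alpha> i))"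
  have finN: "finite N" unfolding N_def by simp
  have injE: "inj e" unfolding e_def inj_def by (metis zero_neq_one)
  have z0e: "z0 \<notin> range e" unfolding e_def z0_def by (auto simp: fun_eq_iff) (metis zero_neq_one)
  have Te: "T w (e i) = w$i *\<^sub>R c (e i)" for w i
  proof -
    have "(\<Prod>k\<in>UNIV. (w$k) ^ e i k) = (\<Prod>k\<in>UNIV. if k = i then w$k else 1)"
      by (rule prod.cong) (auto simp: e_def)
    thus ?thesis by (simp add: T_def)
  qed
  have sumN: "sum (T w) N = c z0 + L w" for w
  proof -
    have "sum (T w) N = T w z0 + sum (T w) (range e)"
      unfolding N_def using z0e by (simp add: sum.insert)
    also have "sum (T w) (range e) = (\<Sum>i\<in>UNIV. T w (e i))"
      using sum.reindex[OF injE, of "T w"] by simp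
    also have "\<dots> = L w" by (simp add: Te L_def)
    finally show ?thesis by (simp add: T_def z0_def)
  qed
  have smn: "(\<lambda>\<alpha>. norm (c \<alpha>) * P \<alpha>) summable_on UNIV"
  proof (rule summable_on_comparison_test)
    show "(\<lambda>\<alpha>. \<Sum>j\<in>UNIV. \<bar>c \<alpha> $ j\<bar> * P \<alpha>) summable_on UNIV"
      by (rule summable_on_finsum) (use sm in \<open>auto simp: P_def\<close>)
    fix \<alpha> :: "'s \<Rightarrow> nat"
    have P0: "P \<alpha> \<ge> 0" unfolding P_def using r by (auto intro: prod_nonneg)
    show "0 \<le> norm (c \<alpha>) * P \<alpha>" using P0 by simp
    have "norm (c \<alpha>) * P \<alpha> \<le> (\<Sum>j\<in>UNIV. \<bar>c \<alpha> $ j\<bar>) * P \<alpha>"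
      by (intro mult_right_mono norm_le_l1_cart P0)
    thus "norm (c \<alpha>) * P \<alpha> \<le> (\<Sum>j\<in>UNIV. \<bar>c \<alpha> $ j\<bar> * P \<alpha>)" by (simp add: sum_distrib_right)
  qed
  define K where "K = (\<Sum>\<^sub>\<infinity>\<alpha>. norm (c \<alpha>) * P \<alpha>)"
  have K0: "K \<ge> 0" unfolding K_def by (intro infsum_nonneg) (use r in \<open>auto simp: P_def intro!: prod_nonneg mult_nonneg_nonneg\<close>)
  have rem: "norm (h (x0 + w) - c z0 - L w) \<le> (K / r^2) * norm w ^ 2" if w: "norm w \<le> r" for w
  proof -
    have wi: "\<forall>i. \<bar>(x0 + w)$i - x0$i\<bar> \<le> r" using w component_le_norm_cart order_trans by fastforce
    have H: "(T w has_sum h (x0 + w)) UNIV" using hs[OF wi] by (simp add: T_def)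
    have H2: "(T w has_sum (h (x0 + w) - (c z0 + L w))) (UNIV - N)"
      using has_sum_Diff[OF H has_sum_finite[OF finN]] by (simp add: sumN)
    define M where "M = (\<lambda>\<alpha>. (norm w / r)^2 * (norm (c \<alpha>) * P \<alpha>))"
    have M: "(M has_sum ((norm w / r)^2 * K)) UNIV"
      unfolding M_def K_def by (intro has_sum_cmult_right) (use smn in auto)
    have "(M has_sum (\<Sum>\<^sub>\<infinity>\<alpha>\<in>UNIV - N. M \<alpha>)) (UNIV - N)"
      using M summable_on_subset has_sum_infsum summable_on_def by (metis subset_UNIV)
    moreover have bnd: "norm (T w \<alpha>) \<le> M \<alpha>" if "\<alpha> \<in> UNIV - N" for \<alpha>
    proof -
      have s2: "(\<Sum>i\<in>UNIV. \<alpha> i) \<ge> 2" using multiindex_small that unfolding N_def e_def z0_def by blast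
      have "norm (T w \<alpha>) = (\<Prod>i\<in>UNIV. \<bar>w$i\<bar> ^ \<alpha> i) * norm (c \<alpha>)"
        by (simp add: T_def abs_prod power_abs)
      also have "(\<Prod>i\<in>UNIV. \<bar>w$i\<bar> ^ \<alpha> i) \<le> (\<Prod>i\<in>UNIV. norm w ^ \<alpha> i)"
        by (intro prod_mono conjI power_mono component_le_norm_cart) auto
      also have "(\<Prod>i\<in>UNIV. norm w ^ \<alpha> i) = norm w ^ (\<Sum>i\<in>UNIV. \<alpha> i)" by (simp add: power_sum)
      also have "\<dots> \<le> (norm w / r)^2 * r ^ (\<Sum>i\<in>UNIV. \<alpha> i)"
      proof -
        obtain k where k: "(\<Sum>i\<in>UNIV. \<alpha> i) = k + 2" using s2 le_Suc_ex by (metis add.commute)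
        have "norm w ^ k \<le> r ^ k" by (intro power_mono w) auto
        hence "norm w ^ k * norm w ^ 2 \<le> r ^ k * norm w ^ 2" by (intro mult_right_mono) auto
        moreover have "(norm w / r)^2 * r^(k+2) = r^k * norm w ^ 2"
          using r by (simp add: power_add power_divide field_simps power2_eq_square)
        moreover have "norm w ^ (k + 2) = norm w ^ k * norm w ^ 2" by (rule power_add)
        ultimately show ?thesis unfolding k by linarith
      qed
      also have "r ^ (\<Sum>i\<in>UNIV. \<alpha> i) = P \<alpha>" by (simp add: P_def power_sum)
      finally show ?thesis unfolding M_def by (simp add: mult_right_mono mult_ac)
    qed
    ultimately have "norm (h (x0 + w) - (c z0 + L w)) \<le> (\<Sum>\<^sub>\<infinity>\<alpha>\<in>UNIV - N. M \<alpha>)"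
      by (intro norm_infsum_le[OF H2]) auto
    also have "\<dots> \<le> (\<Sum>\<^sub>\<infinity>\<alpha>. M \<alpha>)"
    proof (rule infsum_mono_neutral)
      show "M summable_on UNIV - N" "M summable_on UNIV" using M summable_on_subset[of M UNIV "UNIV - N"]
        by (auto simp: summable_on_def)
      show "0 \<le> M \<alpha>" for \<alpha> using r unfolding M_def P_def by (auto intro!: mult_nonneg_nonneg prod_nonneg)
    qed auto
    also have "\<dots> = (norm w / r)^2 * K" using M by (simp add: infsumI)
    also have "\<dots> = (K / r^2) * norm w ^ 2" by (simp add: power_divide)
    finally show ?thesis by (simp add: algebra_simps)
  qed
  have "L 0 = 0" by (simp add: L_def)
  hence h0: "h x0 = c z0" using rem[of 0] r by simp
  have bl: "bounded_linear L"
    unfolding L_def by (intro bounded_linear_sum bounded_linear_compose[OF bounded_linear_scaleR_left bounded_linear_vec_nth])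
  have "(h has_derivative L) (at x0)"
    unfolding has_derivative_at_alt
  proof (intro conjI bl allI impI)
    fix \<epsilon> :: real assume \<epsilon>: "\<epsilon> > 0"
    define d where "d = min r (\<epsilon> / (K / r^2 + 1))"
    have Kp: "K / r^2 + 1 > 0" using K0 r by (simp add: add_nonneg_pos)
    have d: "d > 0" using \<epsilon> r Kp by (simp add: d_def)
    show "\<exists>d>0. \<forall>y. norm (y - x0) < d \<longrightarrow> norm (h y - h x0 - L (y - x0)) \<le> \<epsilon> * norm (y - x0)"
    proof (rule exI[of _ d], intro conjI allI impI d)
      fix y assume y: "norm (y - x0) < d"
      define w where "w = y - x0"
      have yw: "y = x0 + w" by (simp add: w_def)
      have wr: "norm w \<le> r" using y by (simp add: w_def d_def)
      have "norm (h y - h x0 - L w) \<le> (K / r^2) * norm w ^ 2" using rem[OF wr] by (simp add: yw h0)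
      also have "\<dots> \<le> (K / r^2 + 1) * (norm w * norm w)"
        by (simp add: power2_eq_square distrib_right)
      also have "\<dots> \<le> (K / r^2 + 1) * (\<epsilon> / (K / r^2 + 1) * norm w)"
      proof (intro mult_left_mono mult_right_mono)
        show "norm w \<le> \<epsilon> / (K / r^2 + 1)" using y by (simp add: w_def d_def)
      qed (use Kp in auto)
      also have "\<dots> = \<epsilon> * norm w" using Kp by (simp add: field_simps)
      finally show "norm (h y - h x0 - L (y - x0)) \<le> \<epsilon> * norm (y - x0)" by (simp add: w_def)
    qed
  qed
  thus ?thesis unfolding differentiable_def by blast
qed



lemma meas_line:
  fixes S :: "'a::euclidean_space set" and b :: 'a
  assumes "S \<in> sets borel"
  shows "(\<lambda>(x, t). indicator S (x + t *\<^sub>R b) :: ennreal) \<in> borel_measurable (lborel \<Otimes>\<^sub>M (lborel :: real measure))"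
  using assms by measurable

lemma line_set_sets:
  fixes S :: "'a::euclidean_space set"
  assumes "S \<in> sets borel"
  shows "{t::real. x + t *\<^sub>R b \<in> S} \<in> sets borel"
  using assms by measurable

lemma emeasure_translate_real:
  fixes A :: "real set"
  assumes "A \<in> sets borel"
  shows "emeasure lborel ((\<lambda>s. t + s) -` A) = emeasure lborel A"
proof -
  have "emeasure lborel A = emeasure (distr lborel borel ((+) t)) A" by (simp add: lborel_distr_plus)
  also have "\<dots> = emeasure lborel ((+) t -` A \<inter> space lborel)"
    by (rule emeasure_distr) (use assms in auto)
  finally show ?thesis by simp
qed

lemma nn_integral_translate:
  fixes f :: "'a::euclidean_space \<Rightarrow> ennreal"
  assumes "f \<in> borel_measurable borel"
  shows "(\<integral>\<^sup>+x. f (x + c) \<partial>lborel) = (\<integral>\<^sup>+x. f x \<partial>lborel)"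
proof -
  have "(\<integral>\<^sup>+x. f x \<partial>lborel) = (\<integral>\<^sup>+x. f x \<partial>distr lborel borel ((+) c))" by (simp add: lborel_distr_plus)
  also have "\<dots> = (\<integral>\<^sup>+x. f (c + x) \<partial>lborel)"
    by (rule nn_integral_distr) (use assms in auto)
  finally show ?thesis by (simp add: add.commute)
qed

lemma step_slice:
  fixes S :: "'a::euclidean_space set" and b :: 'a
  assumes S: "S \<in> sets borel"
  defines "S' \<equiv> {x. 0 < emeasure lborel {t::real. x + t *\<^sub>R b \<in> S}}"
  shows "S' \<in> sets borel" and "\<And>x t. x \<in> S' \<Longrightarrow> x + t *\<^sub>R b \<in> S'"
    and "emeasure lborel S \<noteq> 0 \<Longrightarrow> emeasure lborel S' \<noteq> 0"
proof -
  have PS: "pair_sigma_finite (lborel :: 'a measure) (lborel :: real measure)"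
    by (simp add: pair_sigma_finite_def lborel.sigma_finite_measure_axioms)
  have em: "emeasure lborel {t::real. x + t *\<^sub>R b \<in> Q} = (\<integral>\<^sup>+t. indicator Q (x + t *\<^sub>R b) \<partial>lborel)"
    if "Q \<in> sets borel" for Q x
  proof -
    have "emeasure lborel {t::real. x + t *\<^sub>R b \<in> Q} = (\<integral>\<^sup>+t. indicator {t::real. x + t *\<^sub>R b \<in> Q} t \<partial>lborel)"
      using line_set_sets[OF that] by (simp add: nn_integral_indicator)
    also have "\<dots> = (\<integral>\<^sup>+t. indicator Q (x + t *\<^sub>R b) \<partial>lborel)"
      by (intro nn_integral_cong) (auto simp: indicator_def)
    finally show ?thesis .
  qed
  have mf: "(\<lambda>x. \<integral>\<^sup>+t. indicator S (x + t *\<^sub>R b) \<partial>lborel) \<in> borel_measurable (lborel :: 'a measure)"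
    using lborel.borel_measurable_nn_integral[OF meas_line[OF S, of b]] by simp
  have "S' = (\<lambda>x. \<integral>\<^sup>+t. indicator S (x + t *\<^sub>R b) \<partial>lborel) -` {0<..} \<inter> space lborel"
    unfolding S'_def using em[OF S] by auto
  also have "\<dots> \<in> sets lborel" by (rule measurable_sets[OF mf]) auto
  finally show S'm: "S' \<in> sets borel" by simp
  have inv: "x + t *\<^sub>R b \<in> S' \<longleftrightarrow> x \<in> S'" for x t
  proof -
    have "{s::real. x + t *\<^sub>R b + s *\<^sub>R b \<in> S} = (\<lambda>s. t + s) -` {s. x + s *\<^sub>R b \<in> S}"
      by (auto simp: algebra_simps)
    hence "emeasure lborel {s::real. x + t *\<^sub>R b + s *\<^sub>R b \<in> S} = emeasure lborel {s. x + s *\<^sub>R b \<in> S}"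
      using emeasure_translate_real[OF line_set_sets[OF S]] by simp
    thus ?thesis unfolding S'_def by simp
  qed
  thus "\<And>x t. x \<in> S' \<Longrightarrow> x + t *\<^sub>R b \<in> S'" by blast
  assume pos: "emeasure lborel S \<noteq> 0"
  define W where "W = - S'"
  have Wm: "S \<inter> W \<in> sets borel" using S S'm by (auto simp: W_def)
  have inner0: "(\<integral>\<^sup>+t. indicator (S \<inter> W) (x + t *\<^sub>R b) \<partial>lborel) = 0" for x
  proof (cases "x \<in> W")
    case True
    hence "indicator (S \<inter> W) (x + t *\<^sub>R b) = (indicator S (x + t *\<^sub>R b) :: ennreal)" for t
      using inv by (auto simp: W_def indicator_def)
    hence "(\<integral>\<^sup>+t. indicator (S \<inter> W) (x + t *\<^sub>R b) \<partial>lborel) = emeasure lborel {t::real. x + t *\<^sub>R b \<in> S}"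
      using em[OF S] by simp
    also have "\<dots> = 0" using True unfolding W_def S'_def by (simp add: not_gr_zero)
    finally show ?thesis .
  next
    case False
    hence "indicator (S \<inter> W) (x + t *\<^sub>R b) = (0 :: ennreal)" for t
      using inv by (auto simp: W_def indicator_def)
    thus ?thesis by simp
  qed
  have "(\<integral>\<^sup>+t. (\<integral>\<^sup>+x. indicator (S \<inter> W) (x + t *\<^sub>R b) \<partial>lborel) \<partial>(lborel::real measure)) =
        (\<integral>\<^sup>+x. (\<integral>\<^sup>+t. indicator (S \<inter> W) (x + t *\<^sub>R b) \<partial>lborel) \<partial>(lborel::'a measure))"
    using pair_sigma_finite.Fubini'[OF PS meas_line[OF Wm, of b]] by simp
  also have "\<dots> = 0" by (simp add: inner0)
  finally have "(\<integral>\<^sup>+t. (\<integral>\<^sup>+x. indicator (S \<inter> W) (x + t *\<^sub>R b) \<partial>lborel) \<partial>(lborel::real measure)) = 0" .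
  moreover have "(\<integral>\<^sup>+x. indicator (S \<inter> W) (x + t *\<^sub>R b) \<partial>lborel) = emeasure lborel (S \<inter> W)" for t
    using nn_integral_translate[of "indicator (S \<inter> W)" "t *\<^sub>R b"] Wm by (simp add: nn_integral_indicator)
  ultimately have "emeasure lborel (S \<inter> W) * emeasure (lborel::real measure) UNIV = 0"
    by (simp add: nn_integral_const)
  hence SW0: "emeasure lborel (S \<inter> W) = 0" by simp
  have "emeasure lborel S \<le> emeasure lborel ((S \<inter> S') \<union> (S \<inter> W))"
    by (intro emeasure_mono) (use S S'm in \<open>auto simp: W_def\<close>)
  also have "\<dots> \<le> emeasure lborel (S \<inter> S') + emeasure lborel (S \<inter> W)"
    by (rule emeasure_subadditive) (use S S'm Wm in auto)
  also have "\<dots> \<le> emeasure lborel S'" using SW0 by (simp add: emeasure_mono S'm)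
  finally show "emeasure lborel S' \<noteq> 0" using pos by (metis le_zero_eq)
qed



lemma KL:
  fixes u :: "'a::euclidean_space \<Rightarrow> real"
  assumes LHu: "\<And>y b. b \<in> Basis \<Longrightarrow> LH (\<lambda>t. u (y + t *\<^sub>R b))"
    and S: "S \<in> sets borel" "emeasure lborel S \<noteq> 0" "\<And>x. x \<in> S \<Longrightarrow> u x = 0"
  shows "u x = 0"
proof -
  have main: "\<exists>S. S \<in> sets borel \<and> emeasure lborel S \<noteq> 0 \<and> (\<forall>x\<in>S. u x = 0) \<and>
      (\<forall>c\<in>I. \<forall>x\<in>S. \<forall>t. x + t *\<^sub>R c \<in> S)" if "finite I" "I \<subseteq> Basis" for I
    using that
  proof (induct I rule: finite_induct)
    case empty then show ?case using S by blast
  next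
    case (insert b I)
    then obtain S0 where S0: "S0 \<in> sets borel" "emeasure lborel S0 \<noteq> 0" "\<forall>x\<in>S0. u x = 0"
      "\<forall>c\<in>I. \<forall>x\<in>S0. \<forall>t. x + t *\<^sub>R c \<in> S0" by auto
    define S' where "S' = {x. 0 < emeasure lborel {t::real. x + t *\<^sub>R b \<in> S0}}"
    note st = step_slice[OF S0(1), where b=b, folded S'_def]
    have b: "b \<in> Basis" using insert by auto
    have u0: "u x = 0" if "x \<in> S'" for x
    proof -
      define T where "T = {t::real. x + t *\<^sub>R b \<in> S0}"
      have "emeasure lborel T \<noteq> 0" using that unfolding S'_def T_def by simp
      then obtain \<xi> where "\<xi> islimpt T" by (rule pos_measure_limpt)
      from LH_zero[OF LHu[OF b, of x] this] have "u (x + 0 *\<^sub>R b) = 0"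
        using S0(3) unfolding T_def by blast
      thus ?thesis by simp
    qed
    have invI: "x + t *\<^sub>R c \<in> S'" if "c \<in> I" "x \<in> S'" for c x t
    proof -
      have "{s::real. x + s *\<^sub>R b \<in> S0} \<subseteq> {s. x + t *\<^sub>R c + s *\<^sub>R b \<in> S0}"
        using S0(4) that(1) by (auto simp: algebra_simps) (metis add.commute add.left_commute)
      hence "emeasure lborel {s::real. x + s *\<^sub>R b \<in> S0} \<le> emeasure lborel {s. x + t *\<^sub>R c + s *\<^sub>R b \<in> S0}"
      proof (rule emeasure_mono)
        show "{s. x + t *\<^sub>R c + s *\<^sub>R b \<in> S0} \<in> sets lborel"
          using line_set_sets[OF S0(1), where x="x + t *\<^sub>R c" and b=b] by simp
      qed
      thus ?thesis using that(2) unfolding S'_def by auto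
    qed
    show ?case
      by (rule exI[of _ S']) (use st(1) st(2) st(3)[OF S0(2)] u0 invI in auto)
  qed
  obtain S1 where S1: "S1 \<in> sets borel" "emeasure lborel S1 \<noteq> 0" "\<forall>x\<in>S1. u x = 0"
      "\<forall>c\<in>Basis. \<forall>x\<in>S1. \<forall>t. x + t *\<^sub>R c \<in> S1"
    using main[of Basis] by auto
  have "S1 \<noteq> {}" using S1(2) by auto
  then obtain x0 where x0: "x0 \<in> S1" by auto
  have sumin: "x0 + (\<Sum>c\<in>J. a c *\<^sub>R c) \<in> S1" if "finite J" "J \<subseteq> Basis" for J a
    using that
  proof (induct J rule: finite_induct)
    case empty then show ?case using x0 by simp
  next
    case (insert b J)
    hence "x0 + (\<Sum>c\<in>J. a c *\<^sub>R c) + a b *\<^sub>R b \<in> S1" using S1(4) by auto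
    thus ?case using insert by (simp add: algebra_simps)
  qed
  have "x = x0 + (\<Sum>c\<in>Basis. ((x - x0) \<bullet> c) *\<^sub>R c)"
    by (simp add: euclidean_representation)
  hence "x \<in> S1" using sumin[of Basis "\<lambda>c. (x - x0) \<bullet> c"] by simp
  thus ?thesis using S1(3) by blast
qed



lemma J_zero:
  fixes h :: "real^'s \<Rightarrow> real^'m"
  assumes "frechet_derivative h (at v0) (axis k 1) = 0"
  shows "jacobian_J h v0 = 0"
proof -
  define M where "M = Dmat h v0"
  have Mk: "M $ l $ k = 0" for l
    using assms by (simp add: M_def Dmat_def matrix_def)
  have "column k (transpose M ** M) = 0"
    by (simp add: column_def vec_eq_iff matrix_matrix_mult_def transpose_def Mk)
  hence "det (transpose M ** M) = 0" by (rule det_zero_column(1))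
  thus ?thesis by (simp add: jacobian_J_def M_def)
qed

lemma const_dir_deriv:
  fixes h :: "real^'s \<Rightarrow> real^'m"
  assumes "h differentiable (at v0)" "\<And>t. h (v0 + t *\<^sub>R b) = h v0"
  shows "frechet_derivative h (at v0) b = 0"
proof -
  define h' where "h' = frechet_derivative h (at v0)"
  have hd: "(h has_derivative h') (at (v0 + 0 *\<^sub>R b))"
    using frechet_derivative_works[THEN iffD1, OF assms(1)] unfolding h'_def by simp
  have ld: "((\<lambda>t::real. v0 + t *\<^sub>R b) has_derivative (\<lambda>t. t *\<^sub>R b)) (at 0)"
    by (auto intro!: derivative_eq_intros)
  have "((h \<circ> (\<lambda>t::real. v0 + t *\<^sub>R b)) has_derivative (h' \<circ> (\<lambda>t. t *\<^sub>R b))) (at 0)"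
    by (rule diff_chain_at[OF ld hd])
  moreover have "((h \<circ> (\<lambda>t::real. v0 + t *\<^sub>R b)) has_derivative (\<lambda>_. 0)) (at 0)"
    using assms(2) by (simp add: comp_def)
  ultimately have "(h' \<circ> (\<lambda>t. t *\<^sub>R b)) = (\<lambda>_. 0)" by (rule has_derivative_unique)
  from fun_cong[OF this, of 1] show ?thesis by (simp add: h'_def)
qed

lemma partial_measurable:
  fixes g :: "real^'s \<Rightarrow> real^'n"
  assumes dg: "\<And>z. g differentiable (at z)"
  shows "(\<lambda>z. frechet_derivative g (at z) a $ i) \<in> borel_measurable borel"
proof -
  have cg: "continuous_on UNIV g"
    using dg differentiable_imp_continuous_on differentiable_at_imp_differentiable_on by blast
  have gm: "g \<in> borel_measurable borel" by (rule borel_measurable_continuous_onI[OF cg])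
  define F where "F = (\<lambda>n z. (g (z + inverse (real (Suc n)) *\<^sub>R a) $ i - g z $ i) / inverse (real (Suc n)))"
  have Fm: "F n \<in> borel_measurable borel" for n
  proof (rule borel_measurable_continuous_onI)
    have c1: "continuous_on UNIV (\<lambda>z. g (z + inverse (real (Suc n)) *\<^sub>R a))"
      by (rule continuous_on_compose2[OF cg]) (auto intro!: continuous_intros)
    show "continuous_on UNIV (F n)"
      unfolding F_def by (intro continuous_intros c1 cg) auto
  qed
  have lim: "(\<lambda>n. F n z) \<longlonglongrightarrow> frechet_derivative g (at z) a $ i" for z
  proof -
    define g' where "g' = frechet_derivative g (at z)"
    have hd: "(g has_derivative g') (at (z + 0 *\<^sub>R a))"
      using frechet_derivative_works[THEN iffD1, OF dg] unfolding g'_def by simp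
    have ld: "((\<lambda>t::real. z + t *\<^sub>R a) has_derivative (\<lambda>t. t *\<^sub>R a)) (at 0)"
      by (auto intro!: derivative_eq_intros)
    have "((g \<circ> (\<lambda>t::real. z + t *\<^sub>R a)) has_derivative (g' \<circ> (\<lambda>t. t *\<^sub>R a))) (at 0)"
      by (rule diff_chain_at[OF ld hd])
    moreover have "linear g'" using hd has_derivative_linear by blast
    ultimately have "((\<lambda>t. g (z + t *\<^sub>R a)) has_derivative (\<lambda>t. t *\<^sub>R g' a)) (at 0)"
      by (simp add: comp_def linear_cmul[of g'] linear_scale)
    hence "((\<lambda>t. g (z + t *\<^sub>R a) $ i) has_derivative (\<lambda>t. (t *\<^sub>R g' a) $ i)) (at 0)"
      by (rule has_derivative_compose[OF _ bounded_linear_imp_has_derivative[OF bounded_linear_vec_nth], unfolded comp_def])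
    hence "((\<lambda>t. g (z + t *\<^sub>R a) $ i) has_real_derivative (g' a $ i)) (at 0)"
      unfolding has_field_derivative_def by (rule has_derivative_eq_rhs) (simp add: fun_eq_iff mult.commute)
    hence "((\<lambda>t. (g (z + (0 + t) *\<^sub>R a) $ i - g (z + 0 *\<^sub>R a) $ i) / t) \<longlongrightarrow> g' a $ i) (at 0)"
      unfolding DERIV_def by simp
    hence "((\<lambda>t. (g (z + t *\<^sub>R a) $ i - g z $ i) / t) \<longlongrightarrow> g' a $ i) (at 0)" by simp
    moreover have "(\<lambda>n. inverse (real (Suc n))) \<longlonglongrightarrow> 0" by (rule LIMSEQ_inverse_real_of_nat)
    ultimately have "((\<lambda>t. (g (z + t *\<^sub>R a) $ i - g z $ i) / t) \<circ> (\<lambda>n. inverse (real (Suc n)))) \<longlonglongrightarrow> g' a $ i"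
      unfolding tendsto_at_iff_sequentially by auto
    thus ?thesis by (simp add: F_def g'_def comp_def)
  qed
  show ?thesis by (rule borel_measurable_LIMSEQ_real[OF lim Fm])
qed



lemma line_deriv:
  fixes g :: "real^'s \<Rightarrow> real^'n"
  assumes hd: "(g has_derivative G) (at (x + t *\<^sub>R b))"
  shows "((\<lambda>s. g (x + s *\<^sub>R b) $ j) has_real_derivative G b $ j) (at t)"
proof -
  have ld: "((\<lambda>s::real. x + s *\<^sub>R b) has_derivative (\<lambda>s. s *\<^sub>R b)) (at t)"
    by (auto intro!: derivative_eq_intros)
  have "((g \<circ> (\<lambda>s::real. x + s *\<^sub>R b)) has_derivative (G \<circ> (\<lambda>s. s *\<^sub>R b))) (at t)"
    by (rule diff_chain_at[OF ld hd])
  moreover have "linear G" using hd has_derivative_linear by blast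
  ultimately have "((\<lambda>s. g (x + s *\<^sub>R b)) has_derivative (\<lambda>s. s *\<^sub>R G b)) (at t)"
    by (simp add: comp_def linear_cmul[of G] linear_scale)
  hence "((\<lambda>s. g (x + s *\<^sub>R b) $ j) has_derivative (\<lambda>s. (s *\<^sub>R G b) $ j)) (at t)"
    by (rule has_derivative_compose[OF _ bounded_linear_imp_has_derivative[OF bounded_linear_vec_nth], unfolded comp_def])
  thus ?thesis
    unfolding has_field_derivative_def by (rule has_derivative_eq_rhs) (simp add: fun_eq_iff mult.commute)
qed

theorem lemma16:
  fixes A :: "(real^'s) set"
    and h :: "real^'s \<Rightarrow> real^'m"
    and f :: "real^'m \<Rightarrow> real^'n"
  assumes "A \<in> sets borel"
    and "emeasure lborel A > 0"
    and "CARD('s) \<le> CARD('m)"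
    and "real_analytic h"
    and "\<exists>v. jacobian_J h v \<noteq> 0"
    and "real_analytic f"
    and "inj_on f (h ` A)"
  shows "AE z in lborel. z \<in> A \<longrightarrow> Dmat (f \<circ> h) z \<noteq> 0"
proof -
  define g where "g = f \<circ> h"
  have dh: "\<And>x. h differentiable (at x)" by (rule analytic_has_derivative[OF assms(4)])
  have df: "\<And>x. f differentiable (at x)" by (rule analytic_has_derivative[OF assms(6)])
  have dg: "\<And>z. g differentiable (at z)" unfolding g_def by (rule differentiable_chain_at[OF dh df])
  define g' where "g' = (\<lambda>z. frechet_derivative g (at z))"
  have g'd: "(g has_derivative g' z) (at z)" for z
    using frechet_derivative_works[THEN iffD1, OF dg] unfolding g'_def by simp
  have Dm0: "Dmat (f \<circ> h) z = 0 \<longleftrightarrow> (\<forall>i j. g' z (axis j 1) $ i = 0)" for z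
    by (simp add: Dmat_def g_def[symmetric] g'_def matrix_def vec_eq_iff)
  define E where "E = {z \<in> A. \<forall>i j. g' z (axis j 1) $ i = 0}"
  have [measurable]: "(\<lambda>z. g' z (axis j 1) $ i) \<in> borel_measurable borel" for i j
    unfolding g'_def by (rule partial_measurable[OF dg])
  have Em: "E \<in> sets borel" unfolding E_def using assms(1) by measurable
  have "emeasure lborel E = 0"
  proof (rule ccontr)
    assume Epos: "emeasure lborel E \<noteq> 0"
    obtain k :: 's where True by blast
    define b :: "real^'s" where "b = axis k 1"
    define E1 where "E1 = {x. 0 < emeasure lborel {t::real. x + t *\<^sub>R b \<in> E}}"
    note st = step_slice[OF Em, where b=b, folded E1_def]
    have E1pos: "emeasure lborel E1 \<noteq> 0" using st(3) Epos by blast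
    have hconst: "h (x + s *\<^sub>R b) = h x" if "x \<in> E1" for x s
    proof -
      define T where "T = {t::real. x + t *\<^sub>R b \<in> E}"
      have "emeasure lborel T \<noteq> 0" using that unfolding E1_def T_def by simp
      then obtain \<xi> where \<xi>: "\<xi> islimpt T" by (rule pos_measure_limpt)
      then obtain t1 where t1: "t1 \<in> T" unfolding islimpt_approachable by (meson zero_less_one)
      have gconst: "g (x + t *\<^sub>R b) = g (x + t1 *\<^sub>R b)" for t
      proof -
        have "g (x + t *\<^sub>R b) $ j = g (x + t1 *\<^sub>R b) $ j" for j
        proof -
          define \<psi> where "\<psi> = (\<lambda>t. g (x + t *\<^sub>R b) $ j)"
          have LH\<psi>: "LH \<psi>" unfolding \<psi>_def g_def comp_def by (rule LH_comp[OF assms(4) assms(6)])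
          have d\<psi>: "deriv \<psi> t = g' (x + t *\<^sub>R b) b $ j" for t
            unfolding \<psi>_def by (rule DERIV_imp_deriv[OF line_deriv[OF g'd]])
          have "deriv \<psi> t = 0" if "t \<in> T" for t
          proof -
            have "g' (x + t *\<^sub>R b) (axis k 1) $ j = 0" using that unfolding T_def E_def by blast
            thus ?thesis by (simp add: d\<psi> b_def)
          qed
          hence d0: "deriv \<psi> s = 0" for s by (rule LH_zero[OF LH_deriv(2)[OF LH\<psi>] \<xi>])
          have "\<forall>s. (\<psi> has_real_derivative 0) (at s)" using LH_deriv(1)[OF LH\<psi>] d0 by metis
          hence "\<psi> t = \<psi> t1" by (rule DERIV_isconst_all)
          thus ?thesis by (simp add: \<psi>_def)
        qed
        thus ?thesis by (simp add: vec_eq_iff)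
      qed
      have hT: "h (x + t *\<^sub>R b) = h (x + t1 *\<^sub>R b)" if "t \<in> T" for t
      proof (rule inj_onD[OF assms(7)])
        show "f (h (x + t *\<^sub>R b)) = f (h (x + t1 *\<^sub>R b))" using gconst[of t] by (simp add: g_def)
        show "h (x + t *\<^sub>R b) \<in> h ` A" "h (x + t1 *\<^sub>R b) \<in> h ` A"
          using that t1 unfolding T_def E_def by auto
      qed
      have hall: "h (x + t *\<^sub>R b) = h (x + t1 *\<^sub>R b)" for t
      proof -
        have "h (x + t *\<^sub>R b) $ i - h (x + t1 *\<^sub>R b) $ i = 0" for i
        proof (rule LH_zero[where \<phi>="\<lambda>t. h (x + t *\<^sub>R b) $ i - h (x + t1 *\<^sub>R b) $ i", OF _ \<xi>])
          show "LH (\<lambda>t. h (x + t *\<^sub>R b) $ i - h (x + t1 *\<^sub>R b) $ i)"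
            by (rule LH_diff[OF LH_line[OF assms(4)] LH_const])
          show "h (x + s *\<^sub>R b) $ i - h (x + t1 *\<^sub>R b) $ i = 0" if "s \<in> T" for s
            using hT[OF that] by simp
        qed
        thus ?thesis by (simp add: vec_eq_iff)
      qed
      show ?thesis using hall[of s] hall[of 0] by simp
    qed
    have hinv: "h (y + s *\<^sub>R b) = h y" for y s
    proof -
      have "h (y + s *\<^sub>R b) $ i - h y $ i = 0" for i
      proof (rule KL[where u="\<lambda>y. h (y + s *\<^sub>R b) $ i - h y $ i", OF _ st(1) E1pos])
        fix y' c :: "real^'s" assume "c \<in> Basis"
        show "LH (\<lambda>t. h (y' + t *\<^sub>R c + s *\<^sub>R b) $ i - h (y' + t *\<^sub>R c) $ i)"
          using LH_diff[OF LH_line[OF assms(4), of "y' + s *\<^sub>R b" c i] LH_line[OF assms(4), of y' c i]]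
          by (simp add: add_ac)
      next
        fix x assume "x \<in> E1" thus "h (x + s *\<^sub>R b) $ i - h x $ i = 0" using hconst by simp
      qed
      thus ?thesis by (simp add: vec_eq_iff)
    qed
    obtain v0 where v0: "jacobian_J h v0 \<noteq> 0" using assms(5) by blast
    have "frechet_derivative h (at v0) b = 0" by (rule const_dir_deriv[OF dh hinv])
    hence "jacobian_J h v0 = 0" unfolding b_def by (rule J_zero)
    thus False using v0 by simp
  qed
  hence "E \<in> null_sets lborel" using Em by auto
  thus ?thesis
    by (rule AE_I') (auto simp: E_def Dm0)
qed


end
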